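(* Let $p\in(0,1]$ and let $\mathcal{D}$ be a distribution supported on $[0,1]$ with $Q=\sup\{y:\Pr_{x\sim\mathcal{D}}(x\le y)\le p\}$. Consider the scoring rule $f_p$ in which each voter gives $\sum_{\ell=k}^m\binom{m}{\ell}(1-p)^\ell p^{m-\ell}$ points to the alternative she ranks in position $k$ (selecting an alternative with largest total score, ties broken arbitrarily). Then for all $n,m$ and every preference profile $\sigma$, $\mathbb{E}[\mathrm{sw}(f_p(\sigma),u)]\ge(1-p)Q\max_{j\in A}\mathbb{E}[\mathrm{sw}(j,u)]$.
   Context: There are $n$ voters and $m$ alternatives $A=\{1,\dots,m\}$. A preference profile $\sigma$ consists of a ranking of $A$ for each voter; position $1$ is the top. Given $\mathcal{D}$ and $\sigma$, a random utility profile $u$ consistent with $\sigma$ is generated as follows: independently for each voter $i$, draw $m$ i.i.d. samples from $\mathcal{D}$ and assign them, from highest to lowest, to the alternatives in the order of voter $i$'s ranking. The social welfare of $j$ is $\mathrm{sw}(j,u)=\sum_i u_{ij}$; expectations are over $u$. *)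

theory Defs
  imports "HOL-Probability.Probability"
begin

text \<open>Alternatives are 1..m, voters are 1..n, positions are 1..m (1 = top).
  A preference profile is given by pos i j = position of alternative j in voter i's ranking;
  it is a profile iff each pos i is a bijection of {1..m} onto {1..m}.\<close>

definition is_profile :: "nat \<Rightarrow> nat \<Rightarrow> (nat \<Rightarrow> nat \<Rightarrow> nat) \<Rightarrow> bool" where
  "is_profile n m pos \<longleftrightarrow> (\<forall>i\<in>{1..n}. bij_betw (pos i) {1..m} {1..m})"

definition kth_largest :: "(nat \<Rightarrow> real) \<Rightarrow> nat \<Rightarrow> nat \<Rightarrow> real" where
  "kth_largest v m k = rev (sort (map v [1..<m+1])) ! (k - 1)"

text \<open>The sample space: for each voter i and each index t \<in> {1..m}, an independent sample
  s (i,t) from D. The utility of voter i for alternative j is the pos i j-th largest of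
  voter i's m samples.\<close>
definition sample_space :: "real measure \<Rightarrow> nat \<Rightarrow> nat \<Rightarrow> (nat \<times> nat \<Rightarrow> real) measure" where
  "sample_space D n m = PiM ({1..n} \<times> {1..m}) (\<lambda>_. D)"

definition utility :: "nat \<Rightarrow> (nat \<Rightarrow> nat \<Rightarrow> nat) \<Rightarrow> (nat \<times> nat \<Rightarrow> real) \<Rightarrow> nat \<Rightarrow> nat \<Rightarrow> real" where
  "utility m pos s i j = kth_largest (\<lambda>t. s (i, t)) m (pos i j)"

definition sw :: "nat \<Rightarrow> nat \<Rightarrow> (nat \<Rightarrow> nat \<Rightarrow> nat) \<Rightarrow> (nat \<times> nat \<Rightarrow> real) \<Rightarrow> nat \<Rightarrow> real" where
  "sw n m pos s j = (\<Sum>i\<in>{1..n}. utility m pos s i j)"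

definition expected_sw :: "real measure \<Rightarrow> nat \<Rightarrow> nat \<Rightarrow> (nat \<Rightarrow> nat \<Rightarrow> nat) \<Rightarrow> nat \<Rightarrow> real" where
  "expected_sw D n m pos j = (\<integral>s. sw n m pos s j \<partial>sample_space D n m)"

definition fp_points :: "real \<Rightarrow> nat \<Rightarrow> nat \<Rightarrow> real" where
  "fp_points p m k = (\<Sum>l=k..m. real (m choose l) * (1 - p) ^ l * p ^ (m - l))"

definition fp_score :: "real \<Rightarrow> nat \<Rightarrow> nat \<Rightarrow> (nat \<Rightarrow> nat \<Rightarrow> nat) \<Rightarrow> nat \<Rightarrow> real" where
  "fp_score p n m pos j = (\<Sum>i\<in>{1..n}. fp_points p m (pos i j))"

text \<open>f_p may select any alternative of maximal total score (ties broken arbitrarily).\<close>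
definition fp_winner :: "real \<Rightarrow> nat \<Rightarrow> nat \<Rightarrow> (nat \<Rightarrow> nat \<Rightarrow> nat) \<Rightarrow> nat \<Rightarrow> bool" where
  "fp_winner p n m pos w \<longleftrightarrow> w \<in> {1..m} \<and> (\<forall>j\<in>{1..m}. fp_score p n m pos j \<le> fp_score p n m pos w)"

definition quantile_Q :: "real measure \<Rightarrow> real \<Rightarrow> real" where
  "quantile_Q D p = Sup {y. measure D {x. x \<le> y} \<le> p}"

end

theory Submission
  imports Defs
begin


definition gsum :: "nat set \<Rightarrow> nat \<Rightarrow> real \<Rightarrow> real" where
  "gsum T k q = (\<Sum>S\<in>{S. S \<subseteq> T \<and> k \<le> card S}. q ^ card S * (1-q) ^ card (T - S))"


lemma gsum_mono_k:
  assumes "finite T" "0 \<le> q" "q \<le> 1" "k' \<le> k"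
  shows "gsum T k q \<le> gsum T k' q"
  unfolding gsum_def
  by (rule sum_mono2) (use assms in auto)

lemma gsum_empty: "gsum {} k q = (if k = 0 then 1 else 0)"
proof -
  have "{S. S \<subseteq> {} \<and> k \<le> card S} = (if k = 0 then {{}} else {})" by auto
  then show ?thesis unfolding gsum_def by simp
qed

lemma gsum_insert:
  assumes T: "finite T" and a: "a \<notin> T"
  shows "gsum (insert a T) k q = (1-q) * gsum T k q + q * gsum T (k-1) q"
proof -
  let ?h = "\<lambda>U S. q ^ card S * (1-q) ^ card (U - S)"
  define A where "A = {S. S \<subseteq> T \<and> k \<le> card S}"
  define B where "B = {S. S \<subseteq> T \<and> k - 1 \<le> card S}"
  have fA: "finite A" "finite B" using T unfolding A_def B_def by auto
  have split: "{S. S \<subseteq> insert a T \<and> k \<le> card S} = A \<union> insert a ` B"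
  proof (rule set_eqI, rule iffI)
    fix S assume S: "S \<in> {S. S \<subseteq> insert a T \<and> k \<le> card S}"
    show "S \<in> A \<union> insert a ` B"
    proof (cases "a \<in> S")
      case True
      have "S - {a} \<subseteq> T" using S by auto
      moreover have "finite S" using S T finite_subset by blast
      moreover have "card (S - {a}) = card S - 1" using True by simp
      ultimately have "S - {a} \<in> B" using S unfolding B_def by auto
      then show ?thesis using True by (metis UnI2 image_eqI insert_Diff)
    next
      case False
      then show ?thesis using S unfolding A_def by auto
    qed
  next
    fix S assume "S \<in> A \<union> insert a ` B"
    then show "S \<in> {S. S \<subseteq> insert a T \<and> k \<le> card S}"
    proof
      assume "S \<in> A" then show ?thesis unfolding A_def by auto
    next
      assume "S \<in> insert a ` B"
      then obtain S' where S': "S' \<in> B" "S = insert a S'" by auto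
      have "finite S'" using S' T finite_subset unfolding B_def by blast
      moreover have "a \<notin> S'" using S' a unfolding B_def by auto
      ultimately have "card S = Suc (card S')" using S' by simp
      then show ?thesis using S' unfolding B_def by auto
    qed
  qed
  have disj: "A \<inter> insert a ` B = {}" using a unfolding A_def B_def by auto
  have inj: "inj_on (insert a) B"
    unfolding B_def inj_on_def using a by (metis Diff_insert_absorb in_mono mem_Collect_eq)
  have sA: "(\<Sum>S\<in>A. ?h (insert a T) S) = (1-q) * gsum T k q"
  proof -
    have "(\<Sum>S\<in>A. ?h (insert a T) S) = (\<Sum>S\<in>A. (1-q) * ?h T S)"
    proof (rule sum.cong[OF refl])
      fix S assume "S \<in> A"
      then have "S \<subseteq> T" unfolding A_def by auto
      then have "insert a T - S = insert a (T - S)" using a by auto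
      moreover have "finite (T - S)" using T by auto
      ultimately have "card (insert a T - S) = Suc (card (T - S))" using a by simp
      then show "?h (insert a T) S = (1-q) * ?h T S" by simp
    qed
    also have "\<dots> = (1-q) * gsum T k q" unfolding gsum_def A_def by (simp add: sum_distrib_left)
    finally show ?thesis .
  qed
  have sB: "(\<Sum>S\<in>insert a ` B. ?h (insert a T) S) = q * gsum T (k-1) q"
  proof -
    have "(\<Sum>S\<in>insert a ` B. ?h (insert a T) S) = (\<Sum>S\<in>B. ?h (insert a T) (insert a S))"
      by (rule sum.reindex[OF inj, unfolded comp_def])
    also have "\<dots> = (\<Sum>S\<in>B. q * ?h T S)"
    proof (rule sum.cong[OF refl])
      fix S assume "S \<in> B"
      then have "S \<subseteq> T" unfolding B_def by auto
      then have "insert a T - insert a S = T - S" using a by auto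
      moreover have "finite S" using T \<open>S \<subseteq> T\<close> finite_subset by blast
      moreover have "a \<notin> S" using a \<open>S \<subseteq> T\<close> by auto
      ultimately show "?h (insert a T) (insert a S) = q * ?h T S" by simp
    qed
    also have "\<dots> = q * gsum T (k-1) q" unfolding gsum_def B_def by (simp add: sum_distrib_left)
    finally show ?thesis .
  qed
  have "gsum (insert a T) k q = (\<Sum>S\<in>A \<union> insert a ` B. ?h (insert a T) S)"
    unfolding gsum_def split ..
  also have "\<dots> = (\<Sum>S\<in>A. ?h (insert a T) S) + (\<Sum>S\<in>insert a ` B. ?h (insert a T) S)"
    by (rule sum.union_disjoint) (use fA disj in auto)
  finally show ?thesis using sA sB by simp
qed

lemma gsum_mono_q:
  assumes "finite T" "0 \<le> r" "r \<le> q" "q \<le> 1"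
  shows "gsum T k r \<le> gsum T k q"
  using assms(1)
proof (induction T arbitrary: k rule: finite_induct)
  case empty
  then show ?case by (simp add: gsum_empty)
next
  case (insert a T)
  have r1: "r \<le> 1" using assms by simp
  have q0: "0 \<le> q" using assms by simp
  have IH1: "gsum T k r \<le> gsum T k q" and IH2: "gsum T (k-1) r \<le> gsum T (k-1) q"
    using insert.IH by auto
  have mk: "gsum T k r \<le> gsum T (k-1) r" by (rule gsum_mono_k) (use insert assms r1 in auto)
  have "(1-r) * gsum T k r + r * gsum T (k-1) r \<le> (1-q) * gsum T k r + q * gsum T (k-1) r"
  proof -
    have "0 \<le> (q - r) * (gsum T (k-1) r - gsum T k r)" using mk assms by simp
    then show ?thesis by (simp add: algebra_simps)
  qed
  also have "\<dots> \<le> (1-q) * gsum T k q + q * gsum T (k-1) q"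
    using IH1 IH2 assms by (intro add_mono mult_left_mono) auto
  finally show ?case using gsum_insert[OF insert(1,2)] by simp
qed

lemma gsum_binom:
  assumes T: "finite T"
  shows "gsum T k q = (\<Sum>l=k..card T. real (card T choose l) * q ^ l * (1-q) ^ (card T - l))"
proof -
  let ?F = "{S. S \<subseteq> T \<and> k \<le> card S}"
  let ?h = "\<lambda>S. q ^ card S * (1-q) ^ card (T - S)"
  have fF: "finite ?F" using T by auto
  have img: "card ` ?F \<subseteq> {k..card T}" using T by (auto intro: card_mono)
  have "gsum T k q = (\<Sum>l\<in>{k..card T}. sum ?h {S \<in> ?F. card S = l})"
    unfolding gsum_def by (rule sum.group[OF fF _ img, symmetric]) simp
  also have "\<dots> = (\<Sum>l=k..card T. real (card T choose l) * q ^ l * (1-q) ^ (card T - l))"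
  proof (rule sum.cong[OF refl])
    fix l assume l: "l \<in> {k..card T}"
    have eq: "{S \<in> ?F. card S = l} = {S. S \<subseteq> T \<and> card S = l}" using l by auto
    have "sum ?h {S \<in> ?F. card S = l} = (\<Sum>S\<in>{S. S \<subseteq> T \<and> card S = l}. q ^ l * (1-q) ^ (card T - l))"
      unfolding eq
    proof (rule sum.cong[OF refl])
      fix S assume "S \<in> {S. S \<subseteq> T \<and> card S = l}"
      then have "S \<subseteq> T" "card S = l" by auto
      then have "card (T - S) = card T - l" using T card_Diff_subset[of S T] finite_subset by metis
      then show "?h S = q ^ l * (1-q) ^ (card T - l)" using \<open>card S = l\<close> by simp
    qed
    also have "\<dots> = real (card T choose l) * q ^ l * (1-q) ^ (card T - l)"
      using n_subsets[OF T, of l] by simp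
    finally show "sum ?h {S \<in> ?F. card S = l} = real (card T choose l) * q ^ l * (1-q) ^ (card T - l)" .
  qed
  finally show ?thesis .
qed

lemma fp_points_gsum: "fp_points p m k = gsum {1..m} k (1-p)"
  unfolding fp_points_def gsum_binom[OF finite_atLeastAtMost] by simp

lemma sum_tail_swap: "(\<Sum>k=1..m. \<Sum>l=k..m. f l) = (\<Sum>l=1..m. real l * f l)"
proof (induction m)
  case 0 then show ?case by simp
next
  case (Suc m)
  have "(\<Sum>k=1..Suc m. \<Sum>l=k..Suc m. f l) = (\<Sum>k=1..m. \<Sum>l=k..Suc m. f l) + f (Suc m)"
    by simp
  also have "(\<Sum>k=1..m. \<Sum>l=k..Suc m. f l) = (\<Sum>k=1..m. (\<Sum>l=k..m. f l) + f (Suc m))"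
    by (rule sum.cong[OF refl]) simp
  also have "\<dots> = (\<Sum>k=1..m. \<Sum>l=k..m. f l) + real m * f (Suc m)"
    by (simp add: sum.distrib)
  finally show ?case using Suc by (simp add: algebra_simps)
qed

lemma sum_fp_points:
  assumes "1 \<le> m"
  shows "(\<Sum>k=1..m. fp_points p m k) = real m * (1 - p)"
proof -
  obtain m' where m: "m = Suc m'" using assms by (cases m) auto
  let ?a = "1 - p" and ?b = p
  have "(\<Sum>k=1..m. fp_points p m k) = (\<Sum>l=1..m. real l * (real (m choose l) * ?a ^ l * ?b ^ (m - l)))"
    unfolding fp_points_def by (rule sum_tail_swap)
  also have "\<dots> = (\<Sum>l=0..m'. real (Suc l) * (real (m choose Suc l) * ?a ^ Suc l * ?b ^ (m - Suc l)))"
    unfolding m by (subst sum.shift_bounds_cl_Suc_ivl[symmetric]) simp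
  also have "\<dots> = (\<Sum>l=0..m'. real m * ?a * (real (m' choose l) * ?a ^ l * ?b ^ (m' - l)))"
  proof (rule sum.cong[OF refl])
    fix l
    have "real (Suc l) * real (m choose Suc l) = real m * real (m' choose l)"
      unfolding m using Suc_times_binomial_eq[of m' l] by (metis mult.commute of_nat_mult)
    moreover have "m - Suc l = m' - l" using m by simp
    ultimately show "real (Suc l) * (real (m choose Suc l) * ?a ^ Suc l * ?b ^ (m - Suc l)) =
      real m * ?a * (real (m' choose l) * ?a ^ l * ?b ^ (m' - l))"
      by (metis (no_types, lifting) mult.assoc mult.left_commute power_Suc)
  qed
  also have "\<dots> = real m * ?a * (\<Sum>l\<le>m'. real (m' choose l) * ?a ^ l * ?b ^ (m' - l))"
    by (simp add: sum_distrib_left atLeast0AtMost)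
  also have "\<dots> = real m * ?a * (?a + ?b) ^ m'"
    by (simp only: binomial_ring)
  finally show ?thesis by simp
qed



lemma kth_desc:
  fixes L :: "real list"
  assumes "i \<le> j" "j < length L"
  shows "rev (sort L) ! j \<le> rev (sort L) ! i"
proof -
  have "sort L ! (length L - Suc j) \<le> sort L ! (length L - Suc i)"
    by (rule sorted_nth_mono) (use assms in auto)
  then show ?thesis using assms by (simp add: rev_nth)
qed

lemma kth_count:
  "card {t\<in>{1..m}. c \<le> v t} = card {i. i < m \<and> c \<le> rev (sort (map v [1..<m+1])) ! i}"
proof -
  let ?L = "map v [1..<m+1]"
  let ?R = "rev (sort ?L)"
  have "length (filter (\<lambda>x. c \<le> x) ?R) = length (filter (\<lambda>x. c \<le> x) ?L)"
    by (metis mset_filter mset_rev mset_sort size_mset)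
  also have "\<dots> = length (filter (\<lambda>t. c \<le> v t) [1..<m+1])"
    by (simp add: filter_map comp_def)
  also have "\<dots> = card {t\<in>{1..m}. c \<le> v t}"
    by (subst distinct_length_filter) (auto intro: arg_cong[where f=card])
  finally have 1: "length (filter (\<lambda>x. c \<le> x) ?R) = card {t\<in>{1..m}. c \<le> v t}" .
  have 2: "length (filter (\<lambda>x. c \<le> x) ?R) = card {i. i < m \<and> c \<le> ?R ! i}"
    by (simp add: length_filter_conv_card)
  show ?thesis using 1 2 by simp
qed

lemma kth_ge_iff:
  assumes "1 \<le> k" "k \<le> m"
  shows "(c \<le> kth_largest v m k) \<longleftrightarrow> (k \<le> card {t\<in>{1..m}. c \<le> v t})"
proof -
  let ?R = "rev (sort (map v [1..<m+1]))"
  have len: "length (map v [1..<m+1]) = m" by simp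
  have K: "kth_largest v m k = ?R ! (k-1)" unfolding kth_largest_def by simp
  show ?thesis
  proof
    assume c: "c \<le> kth_largest v m k"
    have "{0..<k} \<subseteq> {i. i < m \<and> c \<le> ?R ! i}"
    proof
      fix i assume "i \<in> {0..<k}"
      then have "i \<le> k - 1" "k - 1 < m" using assms by auto
      then have "?R ! (k-1) \<le> ?R ! i" using kth_desc[of i "k-1" "map v [1..<m+1]"] len by simp
      then show "i \<in> {i. i < m \<and> c \<le> ?R ! i}" using c K \<open>i \<le> k-1\<close> \<open>k-1<m\<close> by auto
    qed
    then have "card {0..<k} \<le> card {i. i < m \<and> c \<le> ?R ! i}"
      by (intro card_mono) auto
    then show "k \<le> card {t\<in>{1..m}. c \<le> v t}" using kth_count[of m c v] by simp
  next
    assume k: "k \<le> card {t\<in>{1..m}. c \<le> v t}"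
    show "c \<le> kth_largest v m k"
    proof (rule ccontr)
      assume "\<not> c \<le> kth_largest v m k"
      then have lt: "?R ! (k-1) < c" using K by simp
      have "{i. i < m \<and> c \<le> ?R ! i} \<subseteq> {0..<k-1}"
      proof
        fix i assume i: "i \<in> {i. i < m \<and> c \<le> ?R ! i}"
        show "i \<in> {0..<k-1}"
        proof (rule ccontr)
          assume "i \<notin> {0..<k-1}"
          then have "k - 1 \<le> i" by simp
          then have "?R ! i \<le> ?R ! (k-1)" using kth_desc[of "k-1" i "map v [1..<m+1]"] len i by simp
          then show False using lt i by simp
        qed
      qed
      then have "card {i. i < m \<and> c \<le> ?R ! i} \<le> card {0..<k-1}"
        by (intro card_mono) auto
      then have "card {i. i < m \<and> c \<le> ?R ! i} \<le> k - 1" by simp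
      then show False using k kth_count[of m c v] assms by simp
    qed
  qed
qed

lemma kth_in:
  assumes "1 \<le> k" "k \<le> m"
  shows "kth_largest v m k \<in> v ` {1..m}"
proof -
  have "kth_largest v m k \<in> set (rev (sort (map v [1..<m+1])))"
    unfolding kth_largest_def using assms by (intro nth_mem) simp
  then show ?thesis by auto
qed



locale vm =
  fixes D :: "real measure" and n m :: nat
  assumes D: "prob_space D" and sD: "sets D = sets borel"
begin

abbreviation "II \<equiv> {1..n} \<times> {1..m}"
abbreviation "MM \<equiv> sample_space D n m"

lemma spD: "space D = UNIV"
  using sets_eq_imp_space_eq[OF sD] by simp

interpretation PS: product_prob_space "\<lambda>_. D" II
  using D by (simp add: product_prob_space_def product_sigma_finite_def product_prob_space_axioms_def
      prob_space_imp_sigma_finite)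

interpretation DD: prob_space D by (rule D)

lemma probM: "prob_space MM"
  unfolding sample_space_def by (rule prob_space_PiM) (use D in auto)

lemma spM: "space MM = PiE II (\<lambda>_. UNIV)"
  unfolding sample_space_def space_PiM spD ..

lemma box:
  assumes A: "\<And>a. a \<in> II \<Longrightarrow> A a \<in> sets borel"
  shows "measure MM (PiE II A) = (\<Prod>a\<in>II. measure D (A a))"
proof -
  have "emeasure MM (PiE II A) = (\<Prod>a\<in>II. emeasure D (A a))"
    unfolding sample_space_def by (rule PS.emeasure_PiM) (use A sD in auto)
  also have "\<dots> = (\<Prod>a\<in>II. ennreal (measure D (A a)))"
    using finite_measure.emeasure_eq_measure[OF prob_space.finite_measure[OF D]] by simp
  also have "\<dots> = ennreal (\<Prod>a\<in>II. measure D (A a))"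
    by (rule prod_ennreal) simp
  finally show ?thesis unfolding measure_def
    by (simp add: prod_nonneg)
qed

lemma comp_meas:
  assumes "(i,t) \<in> II"
  shows "(\<lambda>s. s (i,t)) \<in> borel_measurable MM"
proof -
  have "(\<lambda>s. s (i,t)) \<in> measurable MM D"
    unfolding sample_space_def using assms by (rule measurable_component_singleton)
  then show ?thesis using measurable_cong_sets[OF refl sD] by blast
qed

lemma AE01: "AE s in MM. \<forall>a\<in>II. s a \<in> {0..1}" if "measure D {0..1} = 1"
proof (rule AE_finite_allI)
  fix a assume a: "a \<in> II"
  have "AE x in D. x \<in> {0..1}" using prob_space.AE_prob_1[OF D that] .
  moreover have eq: "distr MM D (\<lambda>s. s a) = D"
    using PS.PiM_component[OF a] unfolding sample_space_def .
  ultimately have "AE x in distr MM D (\<lambda>s. s a). x \<in> {0..1}"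
    by (simp only: eq)
  moreover have "(\<lambda>s. s a) \<in> measurable MM D"
    unfolding sample_space_def using a by (rule measurable_component_singleton)
  ultimately show "AE s in MM. s a \<in> {0..1}" by (rule AE_distrD[rotated])
qed simp

end


context vm begin
interpretation DD: prob_space D by (rule D)


definition cnt :: "real \<Rightarrow> nat \<Rightarrow> (nat\<times>nat \<Rightarrow> real) \<Rightarrow> nat" where
  "cnt c i s = card {t\<in>{1..m}. c \<le> s (i,t)}"

lemma cnt_iff: "k \<le> cnt c i s \<longleftrightarrow> (\<exists>S\<in>{S. S \<subseteq> {1..m} \<and> card S = k}. \<forall>t\<in>S. c \<le> s (i,t))"
proof
  assume "k \<le> cnt c i s"
  then obtain T where "T \<subseteq> {t\<in>{1..m}. c \<le> s (i,t)}" "card T = k"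
    unfolding cnt_def by (rule obtain_subset_with_card_n)
  then show "\<exists>S\<in>{S. S \<subseteq> {1..m} \<and> card S = k}. \<forall>t\<in>S. c \<le> s (i,t)"
    by (intro bexI[where x=T]) auto
next
  assume "\<exists>S\<in>{S. S \<subseteq> {1..m} \<and> card S = k}. \<forall>t\<in>S. c \<le> s (i,t)"
  then obtain S where S: "S \<subseteq> {1..m}" "card S = k" "\<forall>t\<in>S. c \<le> s (i,t)" by auto
  then have "S \<subseteq> {t\<in>{1..m}. c \<le> s (i,t)}" by auto
  then have "card S \<le> cnt c i s" unfolding cnt_def by (intro card_mono) auto
  then show "k \<le> cnt c i s" using S by simp
qed

lemma cnt_sets:
  assumes i: "i \<in> {1..n}"
  shows "{s\<in>space MM. k \<le> cnt c i s} \<in> sets MM"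
proof -
  have "Measurable.pred MM (\<lambda>s. \<exists>S\<in>{S. S \<subseteq> {1..m} \<and> card S = k}. \<forall>t\<in>S. c \<le> s (i,t))"
  proof (intro pred_intros_finite)
    show "finite {S. S \<subseteq> {1..m} \<and> card S = k}" by simp
  next
    fix S t assume "S \<in> {S. S \<subseteq> {1..m} \<and> card S = k}" "t \<in> S"
    then have "(i,t) \<in> II" using i by auto
    note [measurable] = comp_meas[OF this]
    show "Measurable.pred MM (\<lambda>s. c \<le> s (i,t))"
      by measurable
  qed (use finite_subset in auto)
  then show ?thesis unfolding cnt_iff by (rule predE)
qed

lemma U_meas:
  assumes i: "i \<in> {1..n}" and k: "1 \<le> k" "k \<le> m"
  shows "(\<lambda>s. kth_largest (\<lambda>t. s (i,t)) m k) \<in> borel_measurable MM"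
proof (rule borel_measurableI_ge)
  fix y
  have "{s\<in>space MM. y \<le> kth_largest (\<lambda>t. s (i,t)) m k} = {s\<in>space MM. k \<le> cnt y i s}"
    unfolding cnt_def using kth_ge_iff[OF k] by simp
  then show "{s\<in>space MM. y \<le> kth_largest (\<lambda>t. s (i,t)) m k} \<in> sets MM"
    using cnt_sets[OF i] by simp
qed

lemma event_prob:
  assumes i: "i \<in> {1..n}"
  shows "measure MM {s\<in>space MM. k \<le> cnt c i s} = gsum {1..m} k (measure D {c..})"
proof -
  define q where "q = measure D {c..}"
  define F where "F = {S. S \<subseteq> {1..m} \<and> k \<le> card S}"
  define A where "A = (\<lambda>S (a :: nat \<times> nat). if fst a = i then (if snd a \<in> S then {c..} else {..<c}) else (UNIV :: real set))"
  define E where "E = (\<lambda>S. PiE II (A S))"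
  have Aset: "A S a \<in> sets borel" for S a unfolding A_def by auto
  have Esets: "E S \<in> sets MM" for S
    unfolding E_def sample_space_def by (rule sets_PiM_I_finite) (auto simp: sD Aset)
  have qc: "measure D {..<c} = 1 - q"
  proof -
    have "{..<c} = space D - {c..}" using spD by auto
    then show ?thesis unfolding q_def using prob_space.prob_compl[OF D, of "{c..}"] sD by simp
  qed
  have EP: "measure MM (E S) = q ^ card S * (1-q) ^ card ({1..m} - S)" if S: "S \<subseteq> {1..m}" for S
  proof -
    have "measure MM (E S) = (\<Prod>a\<in>II. measure D (A S a))"
      unfolding E_def by (rule box) (rule Aset)
    also have "\<dots> = (\<Prod>a\<in>{i}\<times>{1..m}. measure D (A S a))"
    proof (rule prod.mono_neutral_right)
      show "\<forall>a\<in>II - {i}\<times>{1..m}. measure D (A S a) = 1"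
        unfolding A_def using prob_space.prob_space[OF D] spD by auto
    qed (use i in auto)
    also have "\<dots> = (\<Prod>t\<in>{1..m}. measure D (A S (i,t)))"
    proof -
      have e: "{i}\<times>{1..m} = Pair i ` {1..m}" by auto
      show ?thesis unfolding e by (subst prod.reindex) (auto simp: inj_on_def)
    qed
    also have "\<dots> = (\<Prod>t\<in>{1..m}. if t \<in> S then q else 1 - q)"
      unfolding A_def using qc q_def by (intro prod.cong) auto
    also have "\<dots> = q ^ card S * (1-q) ^ card ({1..m} - S)"
      using S by (simp add: prod.If_cases Int_absorb1 Diff_eq)
    finally show ?thesis .
  qed
  have Echar: "s \<in> E S \<longleftrightarrow> s \<in> space MM \<and> (\<forall>t\<in>{1..m}. (c \<le> s (i,t) \<longleftrightarrow> t \<in> S))" for s S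
  proof
    assume s: "s \<in> E S"
    then have ext: "s \<in> extensional II" and mem: "\<And>a. a \<in> II \<Longrightarrow> s a \<in> A S a"
      unfolding E_def PiE_iff by auto
    have "s \<in> space MM" unfolding spM PiE_iff using ext by simp
    moreover have "c \<le> s (i,t) \<longleftrightarrow> t \<in> S" if t: "t \<in> {1..m}" for t
    proof -
      have "(i,t) \<in> II" using i t by simp
      from mem[OF this] show ?thesis unfolding A_def by (cases "t \<in> S") auto
    qed
    ultimately show "s \<in> space MM \<and> (\<forall>t\<in>{1..m}. (c \<le> s (i,t) \<longleftrightarrow> t \<in> S))" by blast
  next
    assume s: "s \<in> space MM \<and> (\<forall>t\<in>{1..m}. (c \<le> s (i,t) \<longleftrightarrow> t \<in> S))"
    then have ext: "s \<in> extensional II" unfolding spM PiE_iff by simp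
    have "s a \<in> A S a" if a: "a \<in> II" for a
    proof (cases "fst a = i")
      case True
      obtain i' t where at: "a = (i',t)" by (cases a)
      then have t: "t \<in> {1..m}" and ii: "i' = i" using a True by auto
      then have "c \<le> s (i,t) \<longleftrightarrow> t \<in> S" using s by blast
      then show ?thesis unfolding A_def at ii by (cases "t \<in> S") auto
    next
      case False
      then show ?thesis unfolding A_def by simp
    qed
    then show "s \<in> E S" unfolding E_def PiE_iff using ext by blast
  qed
  have Un: "{s\<in>space MM. k \<le> cnt c i s} = (\<Union>S\<in>F. E S)"
  proof (rule set_eqI, rule iffI)
    fix s assume s: "s \<in> {s\<in>space MM. k \<le> cnt c i s}"
    let ?S = "{t\<in>{1..m}. c \<le> s (i,t)}"
    have "?S \<in> F" using s unfolding F_def cnt_def by auto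
    moreover have "s \<in> E ?S" unfolding Echar using s by auto
    ultimately show "s \<in> (\<Union>S\<in>F. E S)" by blast
  next
    fix s assume "s \<in> (\<Union>S\<in>F. E S)"
    then obtain S where S: "S \<in> F" "s \<in> E S" by auto
    then have sp: "s \<in> space MM" and eqv: "\<forall>t\<in>{1..m}. (c \<le> s (i,t) \<longleftrightarrow> t \<in> S)"
      unfolding Echar by auto
    have "S = {t\<in>{1..m}. c \<le> s (i,t)}" using S eqv unfolding F_def by auto
    then show "s \<in> {s\<in>space MM. k \<le> cnt c i s}" using S sp unfolding F_def cnt_def by auto
  qed
  have disj: "disjoint_family_on E F"
    unfolding disjoint_family_on_def
  proof (intro ballI impI)
    fix S S' assume SS: "S \<in> F" "S' \<in> F" "S \<noteq> S'"
    show "E S \<inter> E S' = {}"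
    proof (rule ccontr)
      assume "E S \<inter> E S' \<noteq> {}"
      then obtain s where s: "s \<in> E S" "s \<in> E S'" by auto
      have "\<forall>t\<in>{1..m}. (t \<in> S \<longleftrightarrow> c \<le> s (i,t))" "\<forall>t\<in>{1..m}. (t \<in> S' \<longleftrightarrow> c \<le> s (i,t))"
        using s unfolding Echar by auto
      then have "S = S'" using SS unfolding F_def by auto
      then show False using SS by simp
    qed
  qed
  interpret PM: prob_space MM by (rule probM)
  have "measure MM (\<Union>S\<in>F. E S) = (\<Sum>S\<in>F. measure MM (E S))"
    by (rule PM.finite_measure_finite_Union) (use disj Esets in \<open>auto simp: F_def\<close>)
  also have "\<dots> = gsum {1..m} k q"
    unfolding gsum_def F_def by (intro sum.cong) (auto simp: EP)
  finally show ?thesis unfolding Un q_def .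
qed

end


context vm begin
interpretation DD: prob_space D by (rule D)
interpretation PM: prob_space MM by (rule probM)

lemma U_bounds:
  assumes D01: "measure D {0..1} = 1" and i: "i \<in> {1..n}" and k: "1 \<le> k" "k \<le> m"
  shows "AE s in MM. 0 \<le> kth_largest (\<lambda>t. s (i,t)) m k \<and> kth_largest (\<lambda>t. s (i,t)) m k \<le> 1"
  using AE01[OF D01]
proof eventually_elim
  case (elim s)
  obtain t where t: "t \<in> {1..m}" "kth_largest (\<lambda>t. s (i,t)) m k = s (i,t)"
    using kth_in[OF k, of "\<lambda>t. s (i,t)"] by auto
  then have "(i,t) \<in> II" using i by auto
  then show ?case using elim t by auto
qed

lemma U_int:
  assumes D01: "measure D {0..1} = 1" and i: "i \<in> {1..n}" and k: "1 \<le> k" "k \<le> m"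
  shows "integrable MM (\<lambda>s. kth_largest (\<lambda>t. s (i,t)) m k)"
proof (rule PM.integrable_const_bound[where B=1])
  show "AE s in MM. norm (kth_largest (\<lambda>t. s (i,t)) m k) \<le> 1"
    using U_bounds[OF assms] by eventually_elim auto
qed (rule U_meas[OF i k])

lemma U_upper:
  assumes D01: "measure D {0..1} = 1" and i: "i \<in> {1..n}" and k: "1 \<le> k" "k \<le> m"
  shows "(\<integral>s. kth_largest (\<lambda>t. s (i,t)) m k \<partial>MM) \<le> 1"
proof -
  have "(\<integral>s. kth_largest (\<lambda>t. s (i,t)) m k \<partial>MM) \<le> (\<integral>s. 1 \<partial>MM)"
    by (rule integral_mono_AE[OF U_int[OF assms]]) (use U_bounds[OF assms] in auto)
  then show ?thesis by (simp add: PM.prob_space)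
qed

lemma U_nonneg:
  assumes D01: "measure D {0..1} = 1" and i: "i \<in> {1..n}" and k: "1 \<le> k" "k \<le> m"
  shows "0 \<le> (\<integral>s. kth_largest (\<lambda>t. s (i,t)) m k \<partial>MM)"
  by (rule integral_nonneg_AE) (use U_bounds[OF assms] in auto)

lemma U_lower:
  assumes D01: "measure D {0..1} = 1" and i: "i \<in> {1..n}" and k: "1 \<le> k" "k \<le> m"
    and c: "0 \<le> c"
  shows "c * gsum {1..m} k (measure D {c..}) \<le> (\<integral>s. kth_largest (\<lambda>t. s (i,t)) m k \<partial>MM)"
proof -
  define Ev where "Ev = {s\<in>space MM. k \<le> cnt c i s}"
  have Ev: "Ev \<in> sets MM" unfolding Ev_def by (rule cnt_sets[OF i])
  have EvI: "Ev \<inter> space MM = Ev" unfolding Ev_def by auto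
  have int2: "integrable MM (\<lambda>s. c * indicator Ev s)"
    using Ev by (intro integrable_mult_right integrable_real_indicator) (auto simp: PM.emeasure_eq_measure)
  have "(\<integral>s. c * indicator Ev s \<partial>MM) \<le> (\<integral>s. kth_largest (\<lambda>t. s (i,t)) m k \<partial>MM)"
  proof (rule integral_mono_AE[OF int2 U_int[OF D01 i k]])
    show "AE s in MM. c * indicator Ev s \<le> kth_largest (\<lambda>t. s (i,t)) m k"
      using U_bounds[OF D01 i k]
    proof eventually_elim
      case (elim s)
      show ?case
      proof (cases "s \<in> Ev")
        case True
        then have "k \<le> card {t\<in>{1..m}. c \<le> s (i,t)}" unfolding Ev_def cnt_def by auto
        then have "c \<le> kth_largest (\<lambda>t. s (i,t)) m k" using kth_ge_iff[OF k] by blast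
        then show ?thesis using True by simp
      next
        case False
        then show ?thesis using elim by simp
      qed
    qed
  qed
  moreover have "(\<integral>s. c * indicator Ev s \<partial>MM) = c * measure MM Ev"
  proof -
    have "Ev \<inter> space MM = Ev" unfolding Ev_def by auto
    then show ?thesis by simp
  qed
  moreover have "measure MM Ev = gsum {1..m} k (measure D {c..})"
    unfolding Ev_def by (rule event_prob[OF i])
  ultimately show ?thesis using EvI by simp
qed

end



lemma quantile_props:
  assumes D: "prob_space D" and sD: "sets D = sets borel" and D01: "measure D {0..1} = 1"
    and p: "0 < p" "p < 1"
  shows "0 \<le> quantile_Q D p" "1 - p \<le> measure D {quantile_Q D p..}"
proof -
  interpret DD: prob_space D by (rule D)
  have spD: "space D = UNIV" using sets_eq_imp_space_eq[OF sD] by simp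
  have ev: "A \<in> sets D" if "A \<in> sets borel" for A using that sD by simp
  define F where "F = (\<lambda>y. measure D {x. x \<le> y})"
  define SS where "SS = {y. F y \<le> p}"
  have Q: "quantile_Q D p = Sup SS" unfolding quantile_Q_def SS_def F_def ..
  have Fmono: "F y \<le> F y'" if "y \<le> y'" for y y'
    unfolding F_def using that by (intro DD.finite_measure_mono) (auto intro: ev)
  have null: "measure D (UNIV - {0..1}) = 0"
    using DD.prob_compl[of "{0..1}"] D01 spD by (simp add: ev)
  have neg: "y \<in> SS" if "y < 0" for y
  proof -
    have "F y \<le> measure D (UNIV - {0..1})"
      unfolding F_def using that by (intro DD.finite_measure_mono) (auto intro: ev)
    then show ?thesis unfolding SS_def using null p by simp
  qed
  have lt1: "y < 1" if "y \<in> SS" for y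
  proof (rule ccontr)
    assume "\<not> y < 1"
    then have "measure D {0..1} \<le> F y"
      unfolding F_def by (intro DD.finite_measure_mono) (auto intro: ev)
    then show False using that D01 p unfolding SS_def by simp
  qed
  have bdd: "bdd_above SS" using lt1 by (meson bdd_aboveI less_imp_le)
  have ne: "SS \<noteq> {}" using neg[of "-1"] by auto
  show Q0: "0 \<le> quantile_Q D p"
  proof (rule ccontr)
    assume "\<not> 0 \<le> quantile_Q D p"
    then have "quantile_Q D p / 2 \<in> SS" using neg by simp
    then have "quantile_Q D p / 2 \<le> quantile_Q D p" unfolding Q by (rule cSup_upper[OF _ bdd])
    then show False using \<open>\<not> 0 \<le> quantile_Q D p\<close> by simp
  qed
  define c where "c = quantile_Q D p"
  have lowF: "F y \<le> p" if "y < c" for y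
  proof -
    have "y < Sup SS" using that unfolding c_def Q .
    then obtain y' where "y' \<in> SS" "y < y'" using less_cSup_iff[OF ne bdd] by blast
    then show ?thesis using Fmono[of y y'] unfolding SS_def by simp
  qed
  define A where "A = (\<lambda>j::nat. {x. x \<le> c - 1 / real (Suc j)})"
  have A_sets: "range A \<subseteq> sets D" unfolding A_def by (auto intro: ev)
  have A_inc: "incseq A"
    unfolding A_def incseq_def
  proof (intro allI impI subsetI)
    fix j j' :: nat and x assume "j \<le> j'" "x \<in> {x. x \<le> c - 1 / real (Suc j)}"
    moreover have "1 / real (Suc j') \<le> 1 / real (Suc j)"
      using \<open>j \<le> j'\<close> by (intro divide_left_mono) auto
    ultimately show "x \<in> {x. x \<le> c - 1 / real (Suc j')}" by auto
  qed
  have UA: "(\<Union>j. A j) = {x. x < c}"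
  proof (rule set_eqI, rule iffI)
    fix x assume "x \<in> (\<Union>j. A j)"
    then show "x \<in> {x. x < c}" unfolding A_def by auto (smt (verit) of_nat_0_le_iff divide_pos_pos)
  next
    fix x assume "x \<in> {x. x < c}"
    then have "0 < c - x" by simp
    then obtain j where "1 / real (Suc j) < c - x" using nat_approx_posE by blast
    then have "x \<in> A j" unfolding A_def by auto
    then show "x \<in> (\<Union>j. A j)" by blast
  qed
  have lim: "(\<lambda>j. measure D (A j)) \<longlonglongrightarrow> measure D {x. x < c}"
    using DD.finite_Lim_measure_incseq[OF A_sets A_inc] unfolding UA .
  have "measure D {x. x < c} \<le> p"
  proof (rule LIMSEQ_le_const2[OF lim])
    show "\<exists>N. \<forall>j\<ge>N. measure D (A j) \<le> p"
      using lowF unfolding A_def F_def by auto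
  qed
  moreover have "measure D {c..} = 1 - measure D {x. x < c}"
  proof -
    have "{c..} = space D - {x. x < c}" using spD by auto
    then show ?thesis using DD.prob_compl[of "{x. x < c}"] by (simp add: ev)
  qed
  ultimately show "1 - p \<le> measure D {quantile_Q D p..}" unfolding c_def by simp
qed



theorem corollary2:
  fixes D :: "real measure" and p :: real and n m :: nat and pos :: "nat \<Rightarrow> nat \<Rightarrow> nat" and w :: nat
  assumes "0 < p" and "p \<le> 1"
    and "prob_space D" and "sets D = sets borel" and "measure D {0..1} = 1"
    and "is_profile n m pos"
    and "fp_winner p n m pos w"
  shows "expected_sw D n m pos w \<ge>
           (1 - p) * quantile_Q D p * (MAX j\<in>{1..m}. expected_sw D n m pos j)"
proof -
  note p = assms(1,2) and D = assms(3) and sD = assms(4) and D01 = assms(5)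
    and prof = assms(6) and win = assms(7)
  have V: "vm D" unfolding vm_def using D sD by simp
  have w: "w \<in> {1..m}" using win unfolding fp_winner_def by auto
  then have m1: "1 \<le> m" by simp
  have posin: "pos i j \<in> {1..m}" if "i \<in> {1..n}" "j \<in> {1..m}" for i j
    using prof that unfolding is_profile_def by (meson bij_betwE)
  define U where "U = (\<lambda>i j. (\<integral>s. kth_largest (\<lambda>t. s (i,t)) m (pos i j) \<partial>sample_space D n m))"
  have esw: "expected_sw D n m pos j = (\<Sum>i\<in>{1..n}. U i j)" if j: "j \<in> {1..m}" for j
  proof -
    have "expected_sw D n m pos j =
      (\<integral>s. (\<Sum>i\<in>{1..n}. kth_largest (\<lambda>t. s (i,t)) m (pos i j)) \<partial>sample_space D n m)"
      unfolding expected_sw_def sw_def utility_def ..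
    also have "\<dots> = (\<Sum>i\<in>{1..n}. U i j)"
      unfolding U_def
      by (rule Bochner_Integration.integral_sum) (use posin[OF _ j] in \<open>auto intro!: vm.U_int[OF V D01]\<close>)
    finally show ?thesis .
  qed
  have upper: "expected_sw D n m pos j \<le> real n" if j: "j \<in> {1..m}" for j
  proof -
    have "(\<Sum>i\<in>{1..n}. U i j) \<le> (\<Sum>i\<in>{1..n}. 1)"
      unfolding U_def by (rule sum_mono) (use posin[OF _ j] in \<open>auto intro!: vm.U_upper[OF V D01]\<close>)
    then show ?thesis using esw[OF j] by simp
  qed
  have Maxn: "(MAX j\<in>{1..m}. expected_sw D n m pos j) \<le> real n"
    by (rule Max.boundedI) (use m1 upper in auto)
  show ?thesis
  proof (cases "p = 1")
    case True
    have "0 \<le> expected_sw D n m pos w"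
      unfolding esw[OF w] U_def
      by (rule sum_nonneg) (use posin[OF _ w] in \<open>auto intro!: vm.U_nonneg[OF V D01]\<close>)
    then show ?thesis using True by simp
  next
    case False
    then have p1: "p < 1" using p by simp
    define Q where "Q = quantile_Q D p"
    have Q0: "0 \<le> Q" and q: "1 - p \<le> measure D {Q..}"
      using quantile_props[OF D sD D01 p(1) p1] unfolding Q_def by auto
    have low: "Q * fp_points p m (pos i j) \<le> U i j" if i: "i \<in> {1..n}" and j: "j \<in> {1..m}" for i j
    proof -
      have k: "1 \<le> pos i j" "pos i j \<le> m" using posin[OF i j] by auto
      have "fp_points p m (pos i j) \<le> gsum {1..m} (pos i j) (measure D {Q..})"
        unfolding fp_points_gsum by (rule gsum_mono_q) (use p1 q prob_space.prob_le_1[OF D] in auto)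
      then have "Q * fp_points p m (pos i j) \<le> Q * gsum {1..m} (pos i j) (measure D {Q..})"
        using Q0 by (intro mult_left_mono)
      also have "\<dots> \<le> U i j" unfolding U_def by (rule vm.U_lower[OF V D01 i k Q0])
      finally show ?thesis .
    qed
    have lhs: "Q * fp_score p n m pos w \<le> expected_sw D n m pos w"
    proof -
      have "Q * fp_score p n m pos w = (\<Sum>i\<in>{1..n}. Q * fp_points p m (pos i w))"
        unfolding fp_score_def by (simp add: sum_distrib_left)
      also have "\<dots> \<le> (\<Sum>i\<in>{1..n}. U i w)" by (rule sum_mono) (rule low[OF _ w])
      finally show ?thesis using esw[OF w] by simp
    qed
    have total: "(\<Sum>j\<in>{1..m}. fp_score p n m pos j) = real n * (real m * (1 - p))"
    proof -
      have "(\<Sum>j\<in>{1..m}. fp_score p n m pos j) = (\<Sum>i\<in>{1..n}. \<Sum>j\<in>{1..m}. fp_points p m (pos i j))"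
        unfolding fp_score_def by (rule sum.swap)
      also have "\<dots> = (\<Sum>i\<in>{1..n}. \<Sum>k\<in>{1..m}. fp_points p m k)"
      proof (rule sum.cong[OF refl])
        fix i assume "i \<in> {1..n}"
        then have "bij_betw (pos i) {1..m} {1..m}" using prof unfolding is_profile_def by auto
        then show "(\<Sum>j\<in>{1..m}. fp_points p m (pos i j)) = (\<Sum>k\<in>{1..m}. fp_points p m k)"
          by (rule sum.reindex_bij_betw)
      qed
      also have "\<dots> = real n * (real m * (1 - p))" using sum_fp_points[OF m1] by simp
      finally show ?thesis .
    qed
    have "(\<Sum>j\<in>{1..m}. fp_score p n m pos j) \<le> real (card {1..m}) * fp_score p n m pos w"
      by (rule sum_bounded_above) (use win in \<open>auto simp: fp_winner_def\<close>)
    then have "real m * (real n * (1 - p)) \<le> real m * fp_score p n m pos w"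
      using total by (simp add: algebra_simps)
    then have fs: "real n * (1 - p) \<le> fp_score p n m pos w" using m1 by simp
    have "(1 - p) * Q * (MAX j\<in>{1..m}. expected_sw D n m pos j) \<le> (1 - p) * Q * real n"
      using Maxn Q0 p1 by (intro mult_left_mono) auto
    also have "\<dots> = Q * (real n * (1 - p))" by simp
    also have "\<dots> \<le> Q * fp_score p n m pos w" using fs Q0 by (rule mult_left_mono)
    also have "\<dots> \<le> expected_sw D n m pos w" by (rule lhs)
    finally show ?thesis unfolding Q_def .
  qed
qed


end
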